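(* Let $t\geq 2$ be an integer, $m=4t+2$, $n=2^m+1$ and $\delta_2=2^{4t-1}+\frac{2^{4t}-1}{5}$. If $x$ is an odd integer with $\delta_2+2\leq x\leq\delta_2+3\cdot 2^{4t-5}$, then $x$ is not a coset leader modulo $n$.
   Context: For $n=2^m+1$ and an integer $x$, the 2-cyclotomic coset of $x$ modulo $n$ is $C_x=\{x\cdot 2^{j} \bmod n : j\geq 0\}\subseteq\{0,1,\dots,n-1\}$. For $0\leq x\leq n-1$, "$x$ is a coset leader" means that $x$ is the smallest element of $C_x$. *)

theory Defs
  imports Main
begin

definition cyc_coset :: "nat \<Rightarrow> nat \<Rightarrow> nat set" where
  "cyc_coset n x = {(x * 2 ^ j) mod n | j. True}"

definition coset_leader :: "nat \<Rightarrow> nat \<Rightarrow> bool" where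
  "coset_leader n x \<longleftrightarrow> x < n \<and> (\<forall>y\<in>cyc_coset n x. x \<le> y)"

end

theory Submission
  imports Defs
begin

lemma pow16_mod5: "(16::nat)^k mod 5 = 1"
proof (induction k)
  case 0 then show ?case by simp
next
  case (Suc k)
  have "(16::nat)^Suc k mod 5 = (16 * (16^k mod 5)) mod 5" by (simp add: mod_mult_right_eq)
  then show ?case using Suc by simp
qed

lemma step_inv:
  fixes x n X Y :: nat
  assumes "40*x > 7*n" "5*x < n" "Y = (16*X) mod n" "x \<le> Y" "Y + x \<le> n"
    and "(x \<le> X \<and> 5*X \<le> n) \<or> (4*n \<le> 5*X \<and> X + x \<le> n)"
  shows "(x \<le> Y \<and> 5*Y \<le> n) \<or> (4*n \<le> 5*Y \<and> Y + x \<le> n)"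
proof (rule ccontr)
  assume c: "\<not> ?thesis"
  define a where "a = (16*X) div n"
  have e: "16*X = a*n + Y" using assms(3) a_def by simp
  have m: "n < 5*Y" "5*Y < 4*n" using c assms by auto
  show False
  proof (cases "x \<le> X \<and> 5*X \<le> n")
    case True
    show False
    proof (cases "a \<le> 2")
      case True
      hence "a*n \<le> 2*n" by simp
      thus False using e m \<open>x \<le> X \<and> 5*X \<le> n\<close> assms(1) by linarith
    next
      case False
      hence "3*n \<le> a*n" by simp
      thus False using e m \<open>x \<le> X \<and> 5*X \<le> n\<close> by linarith
    qed
  next
    case False
    hence h: "4*n \<le> 5*X \<and> X + x \<le> n" using assms(6) by blast
    show False
    proof (cases "a \<le> 12")
      case True
      hence "a*n \<le> 12*n" by simp
      thus False using e m h by linarith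
    next
      case False
      hence "13*n \<le> a*n" by simp
      thus False using e m h assms(1) by linarith
    qed
  qed
qed

lemma final_step:
  fixes x n X :: nat
  assumes "5*x < n" "0 < x" "(4*X) mod n = n - x" "x < n"
    and "(x \<le> X \<and> 5*X \<le> n) \<or> (4*n \<le> 5*X \<and> X + x \<le> n)"
  shows False
proof -
  define b where "b = (4*X) div n"
  have e: "4*X = b*n + (n - x)" using assms(3) b_def by (metis div_mult_mod_eq)
  show False
  proof (cases "b \<le> 2")
    case True
    hence "b*n \<le> 2*n" by simp
    thus False using e assms by linarith
  next
    case False
    hence "3*n \<le> b*n" by simp
    thus False using e assms by linarith
  qed
qed

theorem lemma4p3:
  fixes t x :: nat
  assumes "t \<ge> 2"
    and "odd x"
    and "2 ^ (4*t - 1) + (2 ^ (4*t) - 1) div 5 + 2 \<le> x"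
    and "x \<le> 2 ^ (4*t - 1) + (2 ^ (4*t) - 1) div 5 + 3 * 2 ^ (4*t - 5)"
  shows "\<not> coset_leader (2 ^ (4*t + 2) + 1) x"
proof
  assume L: "coset_leader (2 ^ (4*t + 2) + 1) x"
  obtain s where ts: "t = s + 2" using assms(1) by (metis add.commute le_Suc_ex)
  define g :: nat where "g = 2 ^ (4*s+3)"
  define n :: nat where "n = 2 ^ (4*t + 2) + 1"
  define m :: nat where "m = 4*t+2"
  have e1: "(2::nat) ^ (4*t - 1) = 16*g"
  proof -
    have "4*t - 1 = (4*s+3) + 4" using ts by simp
    hence "(2::nat) ^ (4*t - 1) = 2^(4*s+3) * 2^4" by (simp only: power_add)
    thus ?thesis unfolding g_def by simp
  qed
  have e2: "(2::nat) ^ (4*t - 5) = g" unfolding g_def ts by simp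
  have e3: "(2::nat) ^ (4*t) = 32*g"
  proof -
    have "4*t = (4*s+3) + 5" using ts by simp
    hence "(2::nat) ^ (4*t) = 2^(4*s+3) * 2^5" by (simp only: power_add)
    thus ?thesis unfolding g_def by simp
  qed
  have e4: "n = 128*g + 1"
  proof -
    have "4*t+2 = (4*s+3) + 7" using ts by simp
    hence "(2::nat) ^ (4*t+2) = 2^(4*s+3) * 2^7" by (simp only: power_add)
    thus ?thesis unfolding g_def n_def by simp
  qed
  have "(2::nat) ^ (4*t) = 16^t" by (simp add: power_mult)
  hence "(32*g) mod 5 = 1" using e3 pow16_mod5 by metis
  hence q: "32*g = 5*(32*g div 5) + 1" by (metis div_mult_mod_eq mult.commute)
  hence q2: "32*g - 1 = 5*(32*g div 5)" by linarith
  hence "(32*g - 1) div 5 = 32*g div 5" by simp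
  hence P5: "5 * ((32*g - 1) div 5) = 32*g - 1" using q2 by simp
  have gpos: "g > 0" unfolding g_def by simp
  define P where "P = (32*g - 1) div 5"
  have PP: "(2 ^ (4*t) - 1) div 5 = P" unfolding P_def e3 ..
  have xl: "16*g + P + 2 \<le> x" using assms(3) unfolding e1 PP .
  have xu: "x \<le> 16*g + P + 3*g" using assms(4) unfolding e1 e2 PP .
  have A1: "40*x > 7*n" using xl P5 e4 P_def gpos by linarith
  have A2: "5*x < n" using xu P5 e4 P_def gpos by linarith
  have xpos: "0 < x" using xl by simp
  have xn: "x < n" using A2 by simp
  define R where "R j = x*2^j mod n" for j
  have lb: "x \<le> R j" for j
  proof -
    have "R j \<in> cyc_coset n x" unfolding R_def cyc_coset_def by blast
    thus ?thesis using L unfolding coset_leader_def n_def by blast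
  qed
  have sm: "R j + x \<le> n" for j
  proof -
    have "(x*2^j + x*2^(j+m)) mod n = 0"
    proof -
      have "x*2^j + x*2^(j+m) = x*2^j * n" unfolding n_def m_def by (simp add: power_add algebra_simps)
      thus ?thesis by simp
    qed
    hence "(R j + R (j+m)) mod n = 0" unfolding R_def by (simp add: mod_add_eq)
    moreover have "R j < n" "R (j+m) < n" unfolding R_def using xn by auto
    moreover have "x \<le> R (j+m)" by (rule lb)
    moreover have "x \<le> R j" by (rule lb)
    ultimately have "R j + R (j+m) = n"
    proof -
      assume a: "(R j + R (j+m)) mod n = 0" "R j < n" "R (j+m) < n" "x \<le> R (j+m)" "x \<le> R j"
      obtain c where c: "R j + R (j+m) = n*c" using a(1) by (metis mod_0_imp_dvd dvdE)
      have "c \<noteq> 0"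
      proof
        assume "c = 0"
        with c have "R j + R (j+m) = 0" by simp
        with a xpos show False by linarith
      qed
      moreover have "\<not> c \<ge> 2"
      proof
        assume "c \<ge> 2"
        hence "n*2 \<le> n*c" by simp
        thus False using c a by linarith
      qed
      ultimately have "c = 1" by linarith
      thus ?thesis using c by simp
    qed
    thus ?thesis using lb[of "j+m"] by linarith
  qed
  have R16: "R (4*k+4) = (16 * R (4*k)) mod n" for k
  proof -
    have eq: "x*2^(4*k+4) = 16 * (x*2^(4*k))" by (simp add: power_add)
    show ?thesis unfolding R_def eq by (simp add: mod_mult_right_eq)
  qed
  have inv: "(x \<le> R (4*k) \<and> 5*R (4*k) \<le> n) \<or> (4*n \<le> 5*R (4*k) \<and> R (4*k) + x \<le> n)" for k
  proof (induction k)
    case 0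
    have "R 0 = x" unfolding R_def using xn by simp
    then show ?case using A2 by simp
  next
    case (Suc k)
    have "4*Suc k = 4*k+4" by simp
    then show ?case using step_inv[OF A1 A2 R16[of k] lb sm Suc.IH] by (simp only:)
  qed
  have R4: "R (4*t+2) = (4 * R (4*t)) mod n"
  proof -
    have eq: "x*2^(4*t+2) = 4 * (x*2^(4*t))" by (simp add: power_add)
    show ?thesis unfolding R_def eq by (simp add: mod_mult_right_eq)
  qed
  have Rm: "R (4*t+2) = n - x"
  proof -
    have "R m = (x * n - x) mod n" unfolding R_def m_def n_def by (simp add: algebra_simps)
    also have "... = n - x"
    proof -
      have e: "x*n - x = (n - x) + (x-1)*n" using xpos xn by (simp add: diff_mult_distrib)
      have "((n - x) + (x-1)*n) mod n = (n - x) mod n" by (rule mod_mult_self1)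
      also have "... = n - x" using xpos xn by simp
      finally show ?thesis using e by simp
    qed
    finally show ?thesis unfolding m_def .
  qed
  show False using final_step[OF A2 xpos _ xn inv[of t]] R4 Rm by simp
qed

end
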